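(* Let $\mathbb X$ be a compact Ahlfors $d$-regular length space. Then there is a constant $C_{\mathrm{TSP}}\in(0,\infty)$ depending only on $\mathbb X$ (namely one with $\mathrm{TSP}_{\mathbb X}(N)\le C_{\mathrm{TSP}}N^{1-1/d}$ for all $N$) such that for all $N\in\mathbb N$, $$\mathcal P^{\mathrm{atom}}_N(\mathbb X)\subset\mathcal P^{\mathrm{curve}}_{C_{\mathrm{TSP}}N^{1-1/d}}(\mathbb X).$$
   Context: $\mathbb X$ is a compact metric space with finite nonnegative Borel measure $\sigma_{\mathbb X}$ of full support; Ahlfors $d$-regular: $\sigma_{\mathbb X}(B_r(x))\sim r^d$ for $x\in\mathbb X$, $0<r\le\mathrm{diam}(\mathbb X)$, constants uniform; length space: $\mathrm{dist}_{\mathbb X}(x,y)$ equals the infimum of lengths of continuous curves joining $x,y$. $\mathrm{TSP}_{\mathbb X}(N)$: worst case over $N$ points in $\mathbb X$ of the minimal cost of a closed tour through them, edge costs being distances. $\mathcal P^{\mathrm{atom}}_N(\mathbb X)=\{\sum_{k=1}^Nw_k\delta_{x_k}:x_k\in\mathbb X,w_k\ge0,\sum w_k=1\}$. $\mathcal P^{\mathrm{curve}}_L(\mathbb X)$: probability measures $\nu$ with $\mathrm{supp}(\nu)\subset\gamma([a,b])$ for some continuous $\gamma\colon[a,b]\to\mathbb X$, $\gamma(a)=\gamma(b)$, with length $\ell(\gamma)=\sup\sum_k\mathrm{dist}(\gamma(t_k),\gamma(t_{k-1}))\le L$. *)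

theory Defs
  imports "HOL-Analysis.Analysis" "HOL-Probability.Probability"
begin

definition curve_length :: "(real \<Rightarrow> 'a::metric_space) \<Rightarrow> real \<Rightarrow> real \<Rightarrow> ereal" where
  "curve_length \<gamma> a b =
     (SUP tn \<in> {(t, n). t 0 = a \<and> t n = b \<and> (\<forall>k<n. t k \<le> t (Suc k))}.
        ereal (\<Sum>k\<in>{1..snd tn}. dist (\<gamma> (fst tn k)) (\<gamma> (fst tn (k - 1)))))"

definition length_space :: "'a::metric_space itself \<Rightarrow> bool" where
  "length_space _ \<longleftrightarrow>
     (\<forall>x y::'a. ereal (dist x y) =
        (INF cab \<in> {(\<gamma>, a, b). a \<le> b \<and> continuous_on {a..b} \<gamma> \<and> \<gamma> a = x \<and> \<gamma> b = y}.
           curve_length (fst cab) (fst (snd cab)) (snd (snd cab))))"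

definition measure_support :: "'a::topological_space measure \<Rightarrow> 'a set" where
  "measure_support \<nu> = {x. \<forall>U. open U \<and> x \<in> U \<longrightarrow> emeasure \<nu> U > 0}"

definition ahlfors_regular :: "'a::metric_space measure \<Rightarrow> real \<Rightarrow> bool" where
  "ahlfors_regular \<sigma> d \<longleftrightarrow>
     (\<exists>c1 c2. 0 < c1 \<and> 0 < c2 \<and>
        (\<forall>x r. 0 < r \<and> r \<le> diameter (UNIV::'a set) \<longrightarrow>
           c1 * r powr d \<le> measure \<sigma> (ball x r) \<and> measure \<sigma> (ball x r) \<le> c2 * r powr d))"

definition tour_cost :: "'a::metric_space list \<Rightarrow> (nat \<Rightarrow> nat) \<Rightarrow> real" where
  "tour_cost xs p = (\<Sum>i<length xs. dist (xs ! p i) (xs ! p (Suc i mod length xs)))"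

definition min_tour :: "'a::metric_space list \<Rightarrow> real" where
  "min_tour xs = Min {tour_cost xs p | p. p permutes {..<length xs}}"

definition TSP :: "'a::metric_space itself \<Rightarrow> nat \<Rightarrow> real" where
  "TSP _ N = Sup {min_tour xs | xs::'a list. length xs = N}"

definition P_atom :: "nat \<Rightarrow> 'a::metric_space measure set" where
  "P_atom N = {\<nu>. sets \<nu> = sets borel \<and>
     (\<exists>x w. (\<forall>k<N. 0 \<le> w k) \<and> (\<Sum>k<N. w k) = 1 \<and>
        (\<forall>A\<in>sets borel. emeasure \<nu> A = (\<Sum>k<N. ennreal (w k) * indicator A (x k))))}"

definition P_curve :: "real \<Rightarrow> 'a::metric_space measure set" where
  "P_curve L = {\<nu>. prob_space \<nu> \<and> sets \<nu> = sets borel \<and>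
     (\<exists>\<gamma> a b. a \<le> b \<and> continuous_on {a..b} \<gamma> \<and> \<gamma> a = \<gamma> b \<and>
        measure_support \<nu> \<subseteq> \<gamma> ` {a..b} \<and> curve_length \<gamma> a b \<le> ereal L)}"

end

theory Submission
  imports Defs
begin


definition psum :: "(real \<Rightarrow> 'a::metric_space) \<Rightarrow> (nat \<Rightarrow> real) \<Rightarrow> nat \<Rightarrow> real" where
  "psum g t n = (\<Sum>k<n. dist (g (t (Suc k))) (g (t k)))"

lemma psum_eq: "(\<Sum>k\<in>{1..n}. dist (g (t k)) (g (t (k - 1)))) = psum g t n"
  unfolding psum_def
proof (induction n)
  case 0 then show ?case by simp
next
  case (Suc n) then show ?case by (simp add: sum.atLeast1_atMost_eq)
qed

definition part :: "real \<Rightarrow> real \<Rightarrow> (nat \<Rightarrow> real) \<Rightarrow> nat \<Rightarrow> bool" where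
  "part a b t n \<longleftrightarrow> t 0 = a \<and> t n = b \<and> (\<forall>k<n. t k \<le> t (Suc k))"

lemma curve_length_alt:
  "curve_length g a b = (SUP tn \<in> {(t, n). part a b t n}. ereal (psum g (fst tn) (snd tn)))"
  unfolding curve_length_def part_def psum_eq by simp

lemma cl_ge: "part a b t n \<Longrightarrow> ereal (psum g t n) \<le> curve_length g a b"
  unfolding curve_length_alt by (rule SUP_upper2[where i="(t,n)"]) auto

lemma cl_le: "(\<And>t n. part a b t n \<Longrightarrow> psum g t n \<le> L) \<Longrightarrow> curve_length g a b \<le> ereal L"
  unfolding curve_length_alt by (rule SUP_least) auto

lemma part_range: "part a b t n \<Longrightarrow> k \<le> n \<Longrightarrow> a \<le> t k \<and> t k \<le> b"
proof -
  assume p: "part a b t n" and k: "k \<le> n"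
  have lo: "\<forall>k\<le>n. a \<le> t k"
  proof (intro allI impI)
    fix k assume "k \<le> n" then show "a \<le> t k"
      using p by (induction k) (auto simp: part_def intro: order_trans)
  qed
  have hi: "\<forall>j\<le>n. t (n - j) \<le> b"
  proof (intro allI impI)
    fix j assume "j \<le> n" then show "t (n - j) \<le> b"
    proof (induction j)
      case 0 then show ?case using p by (simp add: part_def)
    next
      case (Suc j)
      then have "t (n - Suc j) \<le> t (Suc (n - Suc j))" using p by (auto simp: part_def)
      moreover have "Suc (n - Suc j) = n - j" using Suc by simp
      ultimately show ?case using Suc by simp
    qed
  qed
  show ?thesis using lo hi[rule_format, of "n - k"] k by simp
qed

lemma cl_nonneg: "a \<le> b \<Longrightarrow> 0 \<le> curve_length g a b"
proof -
  assume "a \<le> b"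
  then have "part a b (\<lambda>k. if k = 0 then a else b) 1" by (simp add: part_def)
  from cl_ge[OF this, of g] have "ereal (dist (g b) (g a)) \<le> curve_length g a b" by (simp add: psum_def)
  moreover have "(0::ereal) \<le> ereal (dist (g b) (g a))" by simp
  ultimately show ?thesis by (rule order_trans[rotated])
qed

lemma cl_const: "curve_length (\<lambda>_. c) a b \<le> 0"
  using cl_le[of a b "\<lambda>_. c" 0] by (simp add: psum_def zero_ereal_def)

lemma cl_subst:
  assumes "\<And>s. s \<in> {a'..b'} \<Longrightarrow> h s = g (\<phi> s)"
    and "\<And>s u. s \<in> {a'..b'} \<Longrightarrow> u \<in> {a'..b'} \<Longrightarrow> s \<le> u \<Longrightarrow> \<phi> s \<le> \<phi> u"
    and "\<phi> a' = a" "\<phi> b' = b" "a' \<le> b'"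
  shows "curve_length h a' b' \<le> curve_length g a b"
  unfolding curve_length_alt[of h]
proof (rule SUP_least, clarsimp)
  fix t n assume p: "part a' b' t n"
  have r: "\<And>k. k \<le> n \<Longrightarrow> t k \<in> {a'..b'}" using part_range[OF p] by auto
  have "part a b (\<phi> \<circ> t) n" using p assms(2-4) r unfolding part_def by auto
  moreover have "psum h t n = psum g (\<phi> \<circ> t) n"
  proof -
    have "\<And>k. k < n \<Longrightarrow> h (t k) = g (\<phi> (t k)) \<and> h (t (Suc k)) = g (\<phi> (t (Suc k)))"
      using assms(1) r by auto
    then show ?thesis unfolding psum_def by (intro sum.cong) auto
  qed
  ultimately show "ereal (psum h t n) \<le> curve_length g a b" using cl_ge by metis
qed

lemma sum_split_add: "(\<Sum>k<m+p. f k) = (\<Sum>k<m. f k) + (\<Sum>k<p. f (m + k::nat))"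
  by (induction p) (auto simp: add.assoc)

lemma cl_split:
  assumes "a \<le> c" "c \<le> b"
  shows "curve_length g a b \<le> curve_length g a c + curve_length g c b"
  unfolding curve_length_alt[of g a b]
proof (rule SUP_least, clarsimp)
  fix t n assume p: "part a b t n"
  have nn: "0 \<le> curve_length g a c + curve_length g c b"
    using cl_nonneg[of a c g] cl_nonneg[of c b g] assms by (simp add: add_nonneg_nonneg)
  show "ereal (psum g t n) \<le> curve_length g a c + curve_length g c b"
  proof (cases "n = 0")
    case True then show ?thesis using nn by (simp add: psum_def zero_ereal_def)
  next
    case False
    define J where "J = {k. k < n \<and> t k \<le> c}"
    have fJ: "finite J" unfolding J_def by auto
    have "0 \<in> J" using p False assms unfolding J_def part_def by auto
    define j where "j = Max J"
    have jJ: "j \<in> J" unfolding j_def using fJ \<open>0 \<in> J\<close> by (intro Max_in) auto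
    have jn: "j < n" and tj: "t j \<le> c" using jJ unfolding J_def by auto
    have tj1: "c \<le> t (Suc j)"
    proof (cases "Suc j < n")
      case True
      have "Suc j \<notin> J" using Max_ge[OF fJ, of "Suc j"] unfolding j_def[symmetric] by auto
      then show ?thesis using True unfolding J_def by auto
    next
      case False
      then have "Suc j = n" using jn by simp
      then show ?thesis using p assms by (simp add: part_def)
    qed
    define t1 where "t1 = (\<lambda>k. if k \<le> j then t k else c)"
    define t2 where "t2 = (\<lambda>k. if k = 0 then c else t (j + k))"
    have p1: "part a c t1 (Suc j)"
      using p tj jn unfolding part_def t1_def by (auto simp: less_Suc_eq)
    have p2: "part c b t2 (n - j)"
      using p tj1 jn unfolding part_def t2_def by auto
    have s1: "psum g t1 (Suc j) = psum g t j + dist (g c) (g (t j))"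
      unfolding psum_def t1_def by (auto intro!: sum.cong)
    have s2: "psum g t2 (n - j) = dist (g (t (Suc j))) (g c) + (\<Sum>k<n - Suc j. dist (g (t (Suc j + Suc k))) (g (t (Suc j + k))))"
    proof -
      have "n - j = Suc (n - Suc j)" using jn by simp
      then have "psum g t2 (n - j) = (\<Sum>k<Suc (n - Suc j). dist (g (t2 (Suc k))) (g (t2 k)))"
        unfolding psum_def by simp
      also have "\<dots> = dist (g (t2 1)) (g (t2 0)) + (\<Sum>k<n - Suc j. dist (g (t2 (Suc (Suc k)))) (g (t2 (Suc k))))"
        by (subst sum.lessThan_Suc_shift) simp
      also have "\<dots> = dist (g (t (Suc j))) (g c) + (\<Sum>k<n - Suc j. dist (g (t (Suc j + Suc k))) (g (t (Suc j + k))))"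
        unfolding t2_def by (simp add: dist_commute)
      finally show ?thesis .
    qed
    have s0: "psum g t n = psum g t j + dist (g (t (Suc j))) (g (t j)) + (\<Sum>k<n - Suc j. dist (g (t (Suc j + Suc k))) (g (t (Suc j + k))))"
    proof -
      have "n = Suc j + (n - Suc j)" using jn by simp
      then have "psum g t n = (\<Sum>k<Suc j + (n - Suc j). dist (g (t (Suc k))) (g (t k)))"
        unfolding psum_def by simp
      also have "\<dots> = psum g t (Suc j) + (\<Sum>k<n - Suc j. dist (g (t (Suc (Suc j + k)))) (g (t (Suc j + k))))"
        unfolding sum_split_add psum_def by simp
      finally show ?thesis by (simp add: psum_def)
    qed
    have tri: "dist (g (t (Suc j))) (g (t j)) \<le> dist (g (t (Suc j))) (g c) + dist (g c) (g (t j))"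
      by (rule dist_triangle)
    have "psum g t n \<le> psum g t1 (Suc j) + psum g t2 (n - j)"
      using s0 s1 s2 tri by simp
    then have "ereal (psum g t n) \<le> ereal (psum g t1 (Suc j)) + ereal (psum g t2 (n - j))"
      by simp
    also have "\<dots> \<le> curve_length g a c + curve_length g c b"
      by (intro add_mono cl_ge p1 p2)
    finally show ?thesis .
  qed
qed

lemma cl_join:
  assumes "pathfinish g1 = pathstart g2"
  shows "curve_length (g1 +++ g2) 0 1 \<le> curve_length g1 0 1 + curve_length g2 0 1"
proof -
  have "curve_length (g1 +++ g2) 0 1 \<le> curve_length (g1 +++ g2) 0 (1/2) + curve_length (g1 +++ g2) (1/2) 1"
    by (rule cl_split) auto
  also have "\<dots> \<le> curve_length g1 0 1 + curve_length g2 0 1"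
  proof (rule add_mono)
    show "curve_length (g1 +++ g2) 0 (1/2) \<le> curve_length g1 0 1"
      by (rule cl_subst[where \<phi>="\<lambda>s. 2 * s"]) (auto simp: joinpaths_def)
    show "curve_length (g1 +++ g2) (1/2) 1 \<le> curve_length g2 0 1"
    proof (rule cl_subst[where \<phi>="\<lambda>s. 2 * s - 1"])
      fix s :: real assume s: "s \<in> {1/2..1}"
      show "(g1 +++ g2) s = g2 (2 * s - 1)"
      proof (cases "s = 1/2")
        case True
        then show ?thesis using assms unfolding True joinpaths_def pathfinish_def pathstart_def by simp
      next
        case False then show ?thesis using s by (simp add: joinpaths_def)
      qed
    qed auto
  qed
  finally show ?thesis .
qed

lemma length_space_path:
  fixes x y :: "'a::metric_space"
  assumes ls: "length_space TYPE('a)" and e: "0 < e"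
  shows "\<exists>g. path g \<and> pathstart g = x \<and> pathfinish g = y \<and> curve_length g 0 1 < ereal (dist x y + e)"
proof -
  let ?S = "{(\<gamma>, a, b). a \<le> b \<and> continuous_on {a..b} \<gamma> \<and> \<gamma> a = x \<and> \<gamma> b = y}"
  have eq: "ereal (dist x y) = (INF cab \<in> ?S. curve_length (fst cab) (fst (snd cab)) (snd (snd cab)))"
    using ls unfolding length_space_def by blast
  have "(INF cab \<in> ?S. curve_length (fst cab) (fst (snd cab)) (snd (snd cab))) < ereal (dist x y + e)"
    unfolding eq[symmetric] using e by simp
  then obtain cab where cab: "cab \<in> ?S" and lt: "curve_length (fst cab) (fst (snd cab)) (snd (snd cab)) < ereal (dist x y + e)"
    by (auto simp: INF_less_iff)
  obtain \<gamma> a b where cabd: "cab = (\<gamma>, a, b)" by (cases cab) auto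
  have ab: "a \<le> b" and ct: "continuous_on {a..b} \<gamma>" and ga: "\<gamma> a = x" and gb: "\<gamma> b = y"
    using cab cabd by auto
  define h where "h = (\<lambda>s. \<gamma> (a + s * (b - a)))"
  have "continuous_on {0..1} h"
    unfolding h_def
  proof (rule continuous_on_compose2[OF ct])
    show "continuous_on {0..1} (\<lambda>s. a + s * (b - a))" by (intro continuous_intros)
    show "(\<lambda>s. a + s * (b - a)) ` {0..1} \<subseteq> {a..b}"
    proof (rule image_subsetI)
      fix s :: real assume "s \<in> {0..1}"
      then have s0: "0 \<le> s" and "s \<le> 1" by auto
      then have "s * (b - a) \<le> 1 * (b - a)" using ab by (intro mult_right_mono) auto
      moreover have "0 \<le> s * (b - a)" using s0 ab by simp
      ultimately show "a + s * (b - a) \<in> {a..b}" by simp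
    qed
  qed
  then have ph: "path h" unfolding path_def .
  have "curve_length h 0 1 \<le> curve_length \<gamma> a b"
    unfolding h_def
  proof (rule cl_subst[where \<phi>="\<lambda>s. a + s * (b - a)"])
    fix s u :: real assume "s \<le> u"
    then have "s * (b - a) \<le> u * (b - a)" using ab by (intro mult_right_mono) auto
    then show "a + s * (b - a) \<le> a + u * (b - a)" by simp
  qed auto
  then have "curve_length h 0 1 < ereal (dist x y + e)" using lt cabd by simp
  moreover have "pathstart h = x" "pathfinish h = y" using ga gb by (auto simp: h_def pathstart_def pathfinish_def)
  ultimately show ?thesis using ph by blast
qed

lemma length_space_connected:
  assumes ls: "length_space TYPE('a::metric_space)"
  shows "connected (UNIV :: 'a set)"
proof -
  obtain x0 :: 'a where True by simp
  have "\<forall>y. \<exists>g. path g \<and> pathstart g = x0 \<and> pathfinish g = (y::'a)"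
  proof
    fix y :: 'a
    show "\<exists>g. path g \<and> pathstart g = x0 \<and> pathfinish g = y"
      using length_space_path[OF ls zero_less_one, of x0 y] by blast
  qed
  then obtain G where G: "\<And>y. path (G y) \<and> pathstart (G y) = x0 \<and> pathfinish (G y) = (y::'a)"
    by metis
  have "connected (\<Union>y. path_image (G y))"
  proof (rule connected_Union)
    fix s assume "s \<in> range (\<lambda>y. path_image (G y))"
    then obtain y where "s = path_image (G y)" by blast
    then show "connected s" using G[of y] connected_path_image by metis
  next
    have "\<And>y. x0 \<in> path_image (G y)" using G pathstart_in_path_image by metis
    then have "x0 \<in> \<Inter> (range (\<lambda>y. path_image (G y)))" by simp
    then show "\<Inter> (range (\<lambda>y. path_image (G y))) \<noteq> {}" by blast
  qed
  moreover have "(\<Union>y. path_image (G y)) = UNIV"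
  proof -
    have "\<And>y. y \<in> path_image (G y)" using G pathfinish_in_path_image by metis
    then show ?thesis by blast
  qed
  ultimately show ?thesis by simp
qed



fun pcost :: "'a::metric_space list \<Rightarrow> real" where
  "pcost (x # y # r) = dist x y + pcost (y # r)"
| "pcost _ = 0"

lemma pcost_append: "pcost (A @ t # B) = pcost (A @ [t]) + pcost (t # B)"
proof (induction A)
  case Nil then show ?case by simp
next
  case (Cons a A) then show ?case by (cases A) auto
qed

lemma pcost_insert: "pcost (A @ t # s # t # B) = pcost (A @ t # B) + 2 * dist t s"
proof -
  have "pcost (A @ t # s # t # B) = pcost (A @ [t]) + pcost (t # s # t # B)" by (rule pcost_append)
  moreover have "pcost (A @ t # B) = pcost (A @ [t]) + pcost (t # B)" by (rule pcost_append)
  ultimately show ?thesis by (simp add: dist_commute)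
qed

lemma list_curve:
  fixes ps :: "'a::metric_space list"
  assumes ls: "length_space TYPE('a)"
  shows "ps \<noteq> [] \<Longrightarrow> 0 < e \<Longrightarrow> \<exists>g. path g \<and> pathstart g = hd ps \<and> pathfinish g = last ps \<and>
     set ps \<subseteq> path_image g \<and> curve_length g 0 1 \<le> ereal (pcost ps + e)"
proof (induction ps arbitrary: e)
  case Nil then show ?case by simp
next
  case (Cons x r)
  show ?case
  proof (cases r)
    case Nil
    have "curve_length (\<lambda>_::real. x) 0 1 \<le> 0" by (rule cl_const)
    also have "(0::ereal) \<le> ereal (pcost [x] + e)" using Cons.prems by simp
    finally have "curve_length (\<lambda>_::real. x) 0 1 \<le> ereal (pcost [x] + e)" .
    moreover have "path (\<lambda>_::real. x)" by (simp add: path_def)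
    moreover have "path_image (\<lambda>_::real. x) = {x}" by (simp add: path_image_def)
    ultimately show ?thesis using Nil by (auto simp: pathstart_def pathfinish_def)
  next
    case (Cons y r')
    have e2: "0 < e / 2" using Cons.prems by simp
    obtain g where g: "path g" "pathstart g = hd r" "pathfinish g = last r" "set r \<subseteq> path_image g"
      "curve_length g 0 1 \<le> ereal (pcost r + e / 2)"
      using Cons.IH[OF _ e2] Cons by auto
    obtain h where h: "path h" "pathstart h = x" "pathfinish h = y" "curve_length h 0 1 < ereal (dist x y + e / 2)"
      using length_space_path[OF ls e2, of x y] by blast
    have hg: "pathfinish h = pathstart g" using h g Cons by simp
    have "curve_length (h +++ g) 0 1 \<le> curve_length h 0 1 + curve_length g 0 1"
      by (rule cl_join[OF hg])
    also have "\<dots> \<le> ereal (dist x y + e / 2) + ereal (pcost r + e / 2)"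
      using h(4) g(5) by (intro add_mono) auto
    also have "\<dots> = ereal (pcost (x # r) + e)" using Cons by simp
    finally have len: "curve_length (h +++ g) 0 1 \<le> ereal (pcost (x # r) + e)" .
    have img: "path_image (h +++ g) = path_image h \<union> path_image g" by (rule path_image_join[OF hg])
    have "x \<in> path_image h" using h pathstart_in_path_image by metis
    then have "set (x # r) \<subseteq> path_image (h +++ g)" using img g(4) by auto
    moreover have "path (h +++ g)" using hg h g by simp
    moreover have "pathstart (h +++ g) = x" "pathfinish (h +++ g) = last (x # r)" using h g Cons by auto
    ultimately show ?thesis using len by auto
  qed
qed

definition chain_conn :: "'a::metric_space set \<Rightarrow> real \<Rightarrow> bool" where
  "chain_conn S \<delta> \<longleftrightarrow> (\<forall>T. T \<subseteq> S \<and> T \<noteq> {} \<and> T \<noteq> S \<longrightarrow> (\<exists>t\<in>T. \<exists>s\<in>S - T. dist t s < \<delta>))"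

lemma walk_exists:
  fixes S :: "'a::metric_space set"
  assumes fin: "finite S" and ne: "S \<noteq> {}" and cc: "chain_conn S \<delta>"
  shows "\<exists>ps. ps \<noteq> [] \<and> hd ps = last ps \<and> set ps = S \<and> pcost ps \<le> 2 * \<delta> * real (card S - 1)"
proof -
  have claim: "n < card S \<Longrightarrow> \<exists>ps. ps \<noteq> [] \<and> hd ps = last ps \<and> set ps \<subseteq> S \<and> card (set ps) = Suc n \<and> pcost ps \<le> 2 * \<delta> * real n" for n
  proof (induction n)
    case 0
    obtain p where "p \<in> S" using ne by blast
    then show ?case by (intro exI[of _ "[p]"]) auto
  next
    case (Suc n)
    then obtain ps where ps: "ps \<noteq> []" "hd ps = last ps" "set ps \<subseteq> S" "card (set ps) = Suc n" "pcost ps \<le> 2 * \<delta> * real n"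
      by auto
    have "set ps \<noteq> S" using ps(4) Suc.prems by auto
    then obtain t s where t: "t \<in> set ps" and s: "s \<in> S - set ps" and d: "dist t s < \<delta>"
      using cc ps unfolding chain_conn_def by (metis set_empty)
    obtain A B where AB: "ps = A @ t # B" using split_list[OF t] by blast
    define ps' where "ps' = A @ t # s # t # B"
    have "ps' \<noteq> []" unfolding ps'_def by simp
    moreover have "hd ps' = last ps'"
    proof -
      have "hd ps' = hd ps" unfolding ps'_def AB by (cases A) auto
      moreover have "last ps' = last ps" unfolding ps'_def AB by (cases B) auto
      ultimately show ?thesis using ps(2) by simp
    qed
    moreover have st: "set ps' = insert s (set ps)" unfolding ps'_def AB by auto
    moreover have "set ps' \<subseteq> S" using st ps(3) s by auto
    moreover have "card (set ps') = Suc (Suc n)" using st s ps(4) by (simp add: card_insert_if)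
    moreover have "pcost ps' \<le> 2 * \<delta> * real (Suc n)"
      using pcost_insert[of A t s B] ps(5) d AB unfolding ps'_def by (simp add: algebra_simps)
    ultimately show ?case by blast
  qed
  have "card S - 1 < card S" using fin ne by (simp add: card_gt_0_iff)
  from claim[OF this] obtain ps where ps: "ps \<noteq> []" "hd ps = last ps" "set ps \<subseteq> S" "card (set ps) = card S"
      "pcost ps \<le> 2 * \<delta> * real (card S - 1)"
    using fin ne by (auto simp: card_gt_0_iff)
  have "set ps = S" using card_subset_eq[OF fin ps(3) ps(4)] .
  then show ?thesis using ps by blast
qed



lemma tour_bound:
  fixes xs :: "'a::metric_space list"
  assumes N: "length xs = Suc m" and cl: "g 0 = g 1" and img: "set xs \<subseteq> g ` {0..1}"
  shows "ereal (min_tour xs) \<le> curve_length g 0 1"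
proof -
  let ?N = "Suc m"
  have "\<forall>i. \<exists>u. i < ?N \<longrightarrow> u \<in> {0..1} \<and> g u = xs ! i"
    using img N by (metis imageE nth_mem subsetD)
  then obtain \<tau> where \<tau>: "\<And>i. i < ?N \<Longrightarrow> \<tau> i \<in> {0..1} \<and> g (\<tau> i) = xs ! i" by metis
  define q where "q = sort_key \<tau> [0..<?N]"
  have lq: "length q = ?N" and sq: "set q = {..<?N}" and dq: "distinct q" and so: "sorted (map \<tau> q)"
    unfolding q_def by auto
  define p where "p = (\<lambda>i. if i < ?N then q ! i else i)"
  have bij: "bij_betw ((!) q) {..<?N} {..<?N}" using bij_betw_nth[OF dq] lq sq by simp
  have "bij_betw p {..<?N} {..<?N}"
    using bij by (rule bij_betw_cong[THEN iffD1, rotated]) (simp add: p_def)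
  then have perm: "p permutes {..<length xs}" using N by (intro bij_imp_permutes) (auto simp: p_def)
  have fin: "finite {tour_cost xs p | p. p permutes {..<length xs}}"
  proof -
    have "{tour_cost xs p | p. p permutes {..<length xs}} = tour_cost xs ` {p. p permutes {..<length xs}}" by auto
    then show ?thesis using finite_permutations[of "{..<length xs}"] by simp
  qed
  have mt: "min_tour xs \<le> tour_cost xs p"
    unfolding min_tour_def using perm fin by (intro Min_le) auto
  define s where "s = (\<lambda>i. \<tau> (q ! i))"
  have qN: "\<And>i. i < ?N \<Longrightarrow> q ! i < ?N" using sq lq by (metis lessThan_iff nth_mem)
  have s01: "\<And>i. i < ?N \<Longrightarrow> s i \<in> {0..1}" using \<tau> qN unfolding s_def by blast
  have smono: "\<And>i j. i \<le> j \<Longrightarrow> j < ?N \<Longrightarrow> s i \<le> s j"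
    using sorted_nth_mono[OF so] lq unfolding s_def by fastforce
  have ys: "\<And>i. i < ?N \<Longrightarrow> xs ! (p i) = g (s i)" using \<tau> qN unfolding s_def p_def by simp
  have tc: "tour_cost xs p = (\<Sum>i<m. dist (g (s i)) (g (s (Suc i)))) + dist (g (s m)) (g (s 0))"
  proof -
    have "tour_cost xs p = (\<Sum>i<?N. dist (xs ! p i) (xs ! p (Suc i mod ?N)))"
      unfolding tour_cost_def N ..
    also have "\<dots> = (\<Sum>i<m. dist (xs ! p i) (xs ! p (Suc i mod ?N))) + dist (xs ! p m) (xs ! p (Suc m mod ?N))"
      by simp
    also have "\<dots> = (\<Sum>i<m. dist (g (s i)) (g (s (Suc i)))) + dist (g (s m)) (g (s 0))"
    proof -
      have "\<And>i. i < m \<Longrightarrow> dist (xs ! p i) (xs ! p (Suc i mod ?N)) = dist (g (s i)) (g (s (Suc i)))"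
        using ys by simp
      then have "(\<Sum>i<m. dist (xs ! p i) (xs ! p (Suc i mod ?N))) = (\<Sum>i<m. dist (g (s i)) (g (s (Suc i))))"
        by (intro sum.cong) auto
      moreover have "dist (xs ! p m) (xs ! p (Suc m mod ?N)) = dist (g (s m)) (g (s 0))"
        using ys[of m] ys[of 0] by simp
      ultimately show ?thesis by simp
    qed
    finally show ?thesis .
  qed
  define t where "t = (\<lambda>k. if k = 0 then 0 else if k \<le> ?N then s (k - 1) else 1)"
  have pt: "part 0 1 t (Suc ?N)"
    unfolding part_def
  proof (intro conjI allI impI)
    show "t 0 = 0" by (simp add: t_def)
    show "t (Suc ?N) = 1" by (simp add: t_def)
    fix k assume k: "k < Suc ?N"
    show "t k \<le> t (Suc k)"
    proof (cases "k = 0")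
      case True then show ?thesis using s01[of 0] by (simp add: t_def)
    next
      case False
      show ?thesis
      proof (cases "k = ?N")
        case True then show ?thesis using s01[of m] by (simp add: t_def)
      next
        case False
        then show ?thesis using \<open>k \<noteq> 0\<close> k smono[of "k - 1" k] by (simp add: t_def)
      qed
    qed
  qed
  have ps: "psum g t (Suc ?N) = dist (g (s 0)) (g 0) + (\<Sum>i<m. dist (g (s (Suc i))) (g (s i))) + dist (g 1) (g (s m))"
  proof -
    have "psum g t (Suc ?N) = psum g t ?N + dist (g (t (Suc ?N))) (g (t ?N))"
      unfolding psum_def by simp
    also have "psum g t ?N = dist (g (t 1)) (g (t 0)) + (\<Sum>i<m. dist (g (t (Suc (Suc i)))) (g (t (Suc i))))"
      unfolding psum_def by (subst sum.lessThan_Suc_shift) simp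
    also have "(\<Sum>i<m. dist (g (t (Suc (Suc i)))) (g (t (Suc i)))) = (\<Sum>i<m. dist (g (s (Suc i))) (g (s i)))"
      by (intro sum.cong) (auto simp: t_def)
    finally show ?thesis by (simp add: t_def)
  qed
  have tri: "dist (g (s m)) (g (s 0)) \<le> dist (g 1) (g (s m)) + dist (g (s 0)) (g 0)"
    using dist_triangle[of "g (s m)" "g (s 0)" "g 1"] cl by (simp add: dist_commute)
  have "tour_cost xs p \<le> psum g t (Suc ?N)"
    using tc ps tri by (simp add: dist_commute)
  then have "ereal (min_tour xs) \<le> ereal (psum g t (Suc ?N))" using mt by simp
  also have "\<dots> \<le> curve_length g 0 1" by (rule cl_ge[OF pt])
  finally show ?thesis .
qed



definition sep :: "real \<Rightarrow> 'a::metric_space set \<Rightarrow> bool" where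
  "sep r F \<longleftrightarrow> (\<forall>x\<in>F. \<forall>y\<in>F. x \<noteq> y \<longrightarrow> r \<le> dist x y)"

lemma sep_card:
  fixes \<sigma> :: "'a::metric_space measure" and F :: "'a set"
  assumes sets: "sets \<sigma> = sets borel" and fm: "finite_measure \<sigma>" and bd: "bounded (UNIV :: 'a set)"
    and c1: "0 < c1"
    and low: "\<forall>x r. 0 < r \<and> r \<le> diameter (UNIV::'a set) \<longrightarrow> c1 * r powr d \<le> measure \<sigma> (ball x r)"
    and r: "0 < r" and fin: "finite F" and sp: "sep r F"
  shows "real (card F) \<le> 1 + measure \<sigma> UNIV / (c1 * (r/2) powr d)"
proof -
  have K0: "0 < c1 * (r/2) powr d" using c1 r by simp
  have Mnn: "0 \<le> measure \<sigma> UNIV / (c1 * (r/2) powr d)" using K0 by simp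
  show ?thesis
  proof (cases "r/2 \<le> diameter (UNIV::'a set)")
    case True
    have sp_eq: "space \<sigma> = UNIV" using sets_eq_imp_space_eq[OF sets] by simp
    have bs: "\<And>x. ball x (r/2) \<in> sets \<sigma>" using sets by simp
    have disj: "disjoint_family_on (\<lambda>x. ball x (r/2)) F"
      unfolding disjoint_family_on_def
    proof (intro ballI impI)
      fix x y assume xy: "x \<in> F" "y \<in> F" "x \<noteq> y"
      show "ball x (r/2) \<inter> ball y (r/2) = {}"
      proof (rule ccontr)
        assume "ball x (r/2) \<inter> ball y (r/2) \<noteq> {}"
        then obtain z where "dist x z < r/2" "dist y z < r/2" by auto
        then have "dist x y < r" using dist_triangle[of x y z] by (simp add: dist_commute)
        then show False using sp xy unfolding sep_def by force
      qed
    qed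
    have "measure \<sigma> (\<Union>x\<in>F. ball x (r/2)) = (\<Sum>x\<in>F. measure \<sigma> (ball x (r/2)))"
      using fin bs disj by (intro finite_measure.finite_measure_finite_Union[OF fm]) auto
    moreover have "(\<Sum>x\<in>F. measure \<sigma> (ball x (r/2))) \<ge> (\<Sum>x\<in>F. c1 * (r/2) powr d)"
      using low True r by (intro sum_mono) auto
    moreover have "measure \<sigma> (\<Union>x\<in>F. ball x (r/2)) \<le> measure \<sigma> UNIV"
    proof (rule finite_measure.finite_measure_mono[OF fm])
      show "UNIV \<in> sets \<sigma>" using sets.top[of \<sigma>] sp_eq by simp
    qed simp
    ultimately have "real (card F) * (c1 * (r/2) powr d) \<le> measure \<sigma> UNIV" by simp
    then have "real (card F) \<le> measure \<sigma> UNIV / (c1 * (r/2) powr d)"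
      using K0 by (simp add: pos_le_divide_eq)
    then show ?thesis by simp
  next
    case False
    have "\<forall>a\<in>F. \<forall>b\<in>F. a = b"
    proof (intro ballI, rule ccontr)
      fix a b assume ab: "a \<in> F" "b \<in> F" "a \<noteq> b"
      have "dist a b \<le> diameter (UNIV::'a set)" using diameter_bounded_bound[OF bd] by simp
      then have "dist a b < r" using False r by simp
      then show False using sp ab unfolding sep_def by force
    qed
    then have "card F \<le> Suc 0" using card_le_Suc0_iff_eq[OF fin] by blast
    then show ?thesis using Mnn by simp
  qed
qed

lemma net_exists:
  fixes \<sigma> :: "'a::metric_space measure"
  assumes sets: "sets \<sigma> = sets borel" and fm: "finite_measure \<sigma>" and bd: "bounded (UNIV :: 'a set)"
    and c1: "0 < c1"
    and low: "\<forall>x r. 0 < r \<and> r \<le> diameter (UNIV::'a set) \<longrightarrow> c1 * r powr d \<le> measure \<sigma> (ball x r)"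
    and r: "0 < r"
  shows "\<exists>E::'a set. finite E \<and> real (card E) \<le> 1 + measure \<sigma> UNIV / (c1 * (r/2) powr d) \<and> (\<forall>x. \<exists>e\<in>E. dist x e < r)"
proof -
  define B where "B = 1 + measure \<sigma> UNIV / (c1 * (r/2) powr d)"
  define Ns where "Ns = {card F | F::'a set. finite F \<and> sep r F}"
  have cb: "\<And>F::'a set. finite F \<Longrightarrow> sep r F \<Longrightarrow> real (card F) \<le> B"
    unfolding B_def by (rule sep_card[OF sets fm bd c1 low r])
  have "Ns \<subseteq> {..nat \<lceil>B\<rceil>}"
  proof
    fix n assume "n \<in> Ns"
    then obtain F :: "'a set" where "finite F" "sep r F" "n = card F" unfolding Ns_def by blast
    then have "real n \<le> B" using cb by simp
    then have "real n \<le> real_of_int \<lceil>B\<rceil>" using le_of_int_ceiling order_trans by blast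
    then have "int n \<le> \<lceil>B\<rceil>" by (metis of_int_le_iff of_int_of_nat_eq)
    then have "n \<le> nat \<lceil>B\<rceil>" by simp
    then show "n \<in> {..nat \<lceil>B\<rceil>}" by simp
  qed
  then have finN: "finite Ns" by (rule finite_subset) simp
  have "(0::nat) = card ({}::'a set) \<and> finite ({}::'a set) \<and> sep r ({}::'a set)" by (simp add: sep_def)
  then have N0: "0 \<in> Ns" unfolding Ns_def by (simp only: mem_Collect_eq) (rule exI)
  then have "Ns \<noteq> {}" by blast
  then have "Max Ns \<in> Ns" using finN by (rule Max_in[rotated])
  then have "\<exists>F::'a set. Max Ns = card F \<and> finite F \<and> sep r F" unfolding Ns_def by (simp only: mem_Collect_eq)
  then obtain F :: "'a set" where F: "finite F" "sep r F" "card F = Max Ns" by metis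
  have dense: "\<forall>x. \<exists>e\<in>F. dist x e < r"
  proof (rule ccontr)
    assume "\<not> (\<forall>x. \<exists>e\<in>F. dist x e < r)"
    then obtain x where "\<not> (\<exists>e\<in>F. dist x e < r)" by blast
    then have x: "\<forall>e\<in>F. r \<le> dist x e" by (simp add: not_less)
    have xF: "x \<notin> F"
    proof
      assume "x \<in> F"
      then have "r \<le> dist x x" using x by blast
      then show False using r by simp
    qed
    have "sep r (insert x F)" using F(2) x unfolding sep_def by (auto simp: dist_commute)
    then have "card (insert x F) \<in> Ns" unfolding Ns_def using F(1) by (simp only: mem_Collect_eq) (intro exI[of _ "insert x F"] conjI refl finite_insert[THEN iffD2])
    then have "card (insert x F) \<le> Max Ns" using finN by simp
    then show False using F xF by simp
  qed
  show ?thesis using F(1) cb[OF F(1,2)] dense unfolding B_def by blast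
qed

lemma dense_chain:
  fixes S E :: "'a::metric_space set"
  assumes conn: "connected (UNIV :: 'a set)" and fin: "finite S" and ES: "E \<subseteq> S"
    and dense: "\<forall>x. \<exists>e\<in>E. dist x e < r" and r: "0 < r"
  shows "chain_conn S (2 * r)"
  unfolding chain_conn_def
proof (intro allI impI)
  fix T assume T: "T \<subseteq> S \<and> T \<noteq> {} \<and> T \<noteq> S"
  show "\<exists>t\<in>T. \<exists>s\<in>S - T. dist t s < 2 * r"
  proof (rule ccontr)
    assume H: "\<not> (\<exists>t\<in>T. \<exists>s\<in>S - T. dist t s < 2 * r)"
    define U where "U = (\<Union>t\<in>T. ball t r)"
    define V where "V = (\<Union>s\<in>S - T. ball s r)"
    have oU: "open U" and oV: "open V" unfolding U_def V_def by auto
    have disj: "U \<inter> V \<inter> UNIV = {}"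
    proof (rule ccontr)
      assume "U \<inter> V \<inter> UNIV \<noteq> {}"
      then obtain z where "z \<in> U" "z \<in> V" by blast
      then obtain t s where h: "t \<in> T" "s \<in> S - T" "dist t z < r" "dist s z < r"
        unfolding U_def V_def by auto
      then have "dist t s < 2 * r" using dist_triangle[of t s z] by (simp add: dist_commute)
      then show False using H h by blast
    qed
    have cov: "UNIV \<subseteq> U \<union> V"
    proof
      fix x :: 'a
      obtain e where "e \<in> E" "dist x e < r" using dense by blast
      then show "x \<in> U \<union> V" using ES unfolding U_def V_def by (cases "e \<in> T") (auto simp: dist_commute)
    qed
    obtain t where "t \<in> T" using T by blast
    then have "t \<in> U" unfolding U_def using r by (intro UN_I[of t]) auto
    moreover obtain s where "s \<in> S - T" using T by blast
    then have "s \<in> V" unfolding V_def using r by (intro UN_I[of s]) auto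
    ultimately show False using connectedD[OF conn oU oV disj cov] by blast
  qed
qed



lemma core:
  fixes \<sigma> :: "'a::metric_space measure"
  assumes sets: "sets \<sigma> = sets borel" and fm: "finite_measure \<sigma>" and bd: "bounded (UNIV :: 'a set)"
    and c1: "0 < c1"
    and low: "\<forall>x r. 0 < r \<and> r \<le> diameter (UNIV::'a set) \<longrightarrow> c1 * r powr d \<le> measure \<sigma> (ball x r)"
    and conn: "connected (UNIV :: 'a set)" and ls: "length_space TYPE('a)" and d: "0 < d"
  shows "\<exists>C>0. \<forall>N (x::nat \<Rightarrow> 'a). 1 \<le> N \<longrightarrow> (\<exists>g. path g \<and> pathstart g = pathfinish g \<and>
            x ` {..<N} \<subseteq> path_image g \<and> curve_length g 0 1 \<le> ereal (C * real N powr (1 - 1/d)))"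
proof -
  define M where "M = measure \<sigma> UNIV"
  have M0: "0 \<le> M" unfolding M_def by simp
  define A where "A = M * 2 powr d / c1"
  have A0: "0 \<le> A" unfolding A_def using M0 c1 by simp
  define C where "C = 8 * (A + 1)"
  have C0: "0 < C" unfolding C_def using A0 by simp
  have "\<forall>N (x::nat \<Rightarrow> 'a). 1 \<le> N \<longrightarrow> (\<exists>g. path g \<and> pathstart g = pathfinish g \<and>
            x ` {..<N} \<subseteq> path_image g \<and> curve_length g 0 1 \<le> ereal (C * real N powr (1 - 1/d)))"
  proof (intro allI impI)
    fix N :: nat and x :: "nat \<Rightarrow> 'a" assume N1: "1 \<le> N"
    have Npos: "0 < real N" using N1 by simp
    define r where "r = real N powr (-1/d)"
    have r0: "0 < r" unfolding r_def using Npos by simp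
    have rd: "r powr d = 1 / real N"
    proof -
      have "r powr d = real N powr (-1/d * d)" unfolding r_def by (simp add: powr_powr)
      also have "-1/d * d = - 1" using d by simp
      also have "real N powr (- 1) = inverse (real N powr 1)" by (rule powr_minus)
      finally show ?thesis using Npos by (simp add: divide_inverse)
    qed
    have r2: "(r/2) powr d = 1 / (real N * 2 powr d)"
      using rd r0 by (simp add: powr_divide)
    have MA: "M / (c1 * (r/2) powr d) = A * real N"
      unfolding r2 A_def using c1 by (simp add: field_simps)
    obtain E :: "'a set" where E: "finite E" "real (card E) \<le> 1 + M / (c1 * (r/2) powr d)"
        "\<forall>x. \<exists>e\<in>E. dist x e < r"
      using net_exists[OF sets fm bd c1 low r0] unfolding M_def by blast
    define S where "S = E \<union> x ` {..<N}"
    have finS: "finite S" unfolding S_def using E(1) by simp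
    have "x 0 \<in> S" unfolding S_def using N1 by auto
    then have neS: "S \<noteq> {}" by blast
    have cS: "card S \<le> card E + N"
    proof -
      have "card S \<le> card E + card (x ` {..<N})" unfolding S_def by (rule card_Un_le)
      also have "card (x ` {..<N}) \<le> N" using card_image_le[of "{..<N}" x] by simp
      finally show ?thesis by simp
    qed
    have cc: "chain_conn S (2 * r)"
      by (rule dense_chain[OF conn finS _ E(3) r0]) (simp add: S_def)
    obtain ps where ps: "ps \<noteq> []" "hd ps = last ps" "set ps = S" "pcost ps \<le> 2 * (2 * r) * real (card S - 1)"
      using walk_exists[OF finS neS cc] by blast
    have cS1: "real (card S - 1) \<le> A * real N + real N"
    proof -
      have "1 \<le> card S" using finS neS by (simp add: Suc_leI card_gt_0_iff)
      then have "real (card S - 1) = real (card S) - 1" by (simp add: of_nat_diff)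
      also have "\<dots> \<le> real (card E) + real N - 1" using cS by linarith
      also have "\<dots> \<le> A * real N + real N" using E(2) MA by simp
      finally show ?thesis .
    qed
    define P where "P = real N powr (1 - 1/d)"
    have P0: "0 < P" unfolding P_def using Npos by simp
    have rN: "r * real N = P"
    proof -
      have "P = real N powr (1 + (-1/d))" unfolding P_def by simp
      also have "\<dots> = real N powr 1 * real N powr (-1/d)" by (rule powr_add)
      finally show ?thesis unfolding r_def using Npos by simp
    qed
    have "pcost ps \<le> 4 * r * (A * real N + real N)"
    proof -
      have "2 * (2 * r) * real (card S - 1) \<le> 2 * (2 * r) * (A * real N + real N)"
        using cS1 r0 by (intro mult_left_mono) auto
      then show ?thesis using ps(4) by simp
    qed
    also have "4 * r * (A * real N + real N) = 4 * (A + 1) * P"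
    proof -
      have "4 * r * (A * real N + real N) = 4 * (A + 1) * (r * real N)" by (simp add: algebra_simps)
      then show ?thesis using rN by simp
    qed
    finally have pc: "pcost ps \<le> 4 * (A + 1) * P" .
    have e0: "0 < 4 * (A + 1) * P" using A0 P0 by simp
    obtain g where g: "path g" "pathstart g = hd ps" "pathfinish g = last ps" "set ps \<subseteq> path_image g"
      "curve_length g 0 1 \<le> ereal (pcost ps + 4 * (A + 1) * P)"
      using list_curve[OF ls ps(1) e0] by blast
    have "curve_length g 0 1 \<le> ereal (C * real N powr (1 - 1/d))"
    proof -
      have "pcost ps + 4 * (A + 1) * P \<le> C * real N powr (1 - 1/d)"
      proof -
        have "8 * (A + 1) * P = 4 * (A + 1) * P + 4 * (A + 1) * P" by simp
        then have "pcost ps + 4 * (A + 1) * P \<le> 8 * (A + 1) * P" using pc by linarith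
        then show ?thesis unfolding C_def P_def .
      qed
      then show ?thesis using g(5) order_trans by fastforce
    qed
    moreover have "x ` {..<N} \<subseteq> path_image g" using g(4) ps(3) unfolding S_def by auto
    moreover have "pathstart g = pathfinish g" using g ps by simp
    ultimately show "\<exists>g. path g \<and> pathstart g = pathfinish g \<and>
            x ` {..<N} \<subseteq> path_image g \<and> curve_length g 0 1 \<le> ereal (C * real N powr (1 - 1/d))"
      using g(1) by blast
  qed
  then show ?thesis using C0 by blast
qed



lemma min_tour_nil: "min_tour ([]::'a::metric_space list) = 0"
proof -
  have "{tour_cost ([]::'a list) p | p. p permutes {..<length ([]::'a list)}} = {0}"
    using permutes_id[of "{}"] by (auto simp: tour_cost_def)
  then show ?thesis unfolding min_tour_def by simp
qed

theorem proposition1: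
  fixes \<sigma> :: "'a::metric_space measure" and d :: real
  assumes "compact (UNIV :: 'a set)"
    and "sets \<sigma> = sets borel"
    and "finite_measure \<sigma>"
    and "measure_support \<sigma> = UNIV"
    and "0 < d"
    and "ahlfors_regular \<sigma> d"
    and "length_space TYPE('a)"
  shows "\<exists>C. 0 < C \<and> (\<forall>N::nat. TSP TYPE('a) N \<le> C * real N powr (1 - 1/d)) \<and>
             (\<forall>N::nat. (P_atom N :: 'a measure set) \<subseteq> P_curve (C * real N powr (1 - 1/d)))"
proof -
  obtain c1 c2 where c1: "0 < c1" and
    low': "\<forall>x r. 0 < r \<and> r \<le> diameter (UNIV::'a set) \<longrightarrow>
           c1 * r powr d \<le> measure \<sigma> (ball x r) \<and> measure \<sigma> (ball x r) \<le> c2 * r powr d"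
    using assms(6) unfolding ahlfors_regular_def by blast
  have low: "\<forall>x r. 0 < r \<and> r \<le> diameter (UNIV::'a set) \<longrightarrow> c1 * r powr d \<le> measure \<sigma> (ball x r)"
    using low' by blast
  have bd: "bounded (UNIV :: 'a set)" using assms(1) by (rule compact_imp_bounded)
  have conn: "connected (UNIV :: 'a set)" using assms(7) by (rule length_space_connected)
  obtain C where C0: "0 < C" and core: "\<And>N (x::nat \<Rightarrow> 'a). 1 \<le> N \<Longrightarrow> \<exists>g. path g \<and> pathstart g = pathfinish g \<and>
            x ` {..<N} \<subseteq> path_image g \<and> curve_length g 0 1 \<le> ereal (C * real N powr (1 - 1/d))"
    using core[OF assms(2) assms(3) bd c1 low conn assms(7) assms(5)] by blast
  have tsp: "TSP TYPE('a) N \<le> C * real N powr (1 - 1/d)" for N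
  proof (cases N)
    case 0
    have "{min_tour xs | xs::'a list. length xs = N} = {0}"
      using 0 min_tour_nil by auto
    then show ?thesis unfolding TSP_def using 0 by simp
  next
    case (Suc m)
    show ?thesis unfolding TSP_def
    proof (rule cSup_least)
      obtain x0 :: 'a where True by simp
      show "{min_tour xs | xs::'a list. length xs = N} \<noteq> {}"
        by (auto intro!: exI[of _ "replicate N x0"])
    next
      fix v assume "v \<in> {min_tour xs | xs::'a list. length xs = N}"
      then obtain xs :: "'a list" where xs: "length xs = N" "v = min_tour xs" by blast
      obtain g where g: "path g" "pathstart g = pathfinish g" "(\<lambda>i. xs ! i) ` {..<N} \<subseteq> path_image g"
        "curve_length g 0 1 \<le> ereal (C * real N powr (1 - 1/d))"
        using core[of N "\<lambda>i. xs ! i"] Suc by auto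
      have "set xs = (\<lambda>i. xs ! i) ` {..<N}" using xs(1) by (auto simp: set_conv_nth)
      then have img: "set xs \<subseteq> g ` {0..1}" using g(3) unfolding path_image_def by simp
      have cl: "g 0 = g 1" using g(2) unfolding pathstart_def pathfinish_def .
      have "ereal (min_tour xs) \<le> curve_length g 0 1"
        by (rule tour_bound[OF _ cl img]) (use xs Suc in simp)
      also have "\<dots> \<le> ereal (C * real N powr (1 - 1/d))" by (rule g(4))
      finally show "v \<le> C * real N powr (1 - 1/d)" using xs by simp
    qed
  qed
  have pc: "(P_atom N :: 'a measure set) \<subseteq> P_curve (C * real N powr (1 - 1/d))" for N
  proof
    fix \<nu> :: "'a measure" assume "\<nu> \<in> P_atom N"
    then obtain x w where sets\<nu>: "sets \<nu> = sets borel" and w0: "\<forall>k<N. 0 \<le> w k" and w1: "(\<Sum>k<N. w k) = 1"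
      and em: "\<forall>A\<in>sets borel. emeasure \<nu> A = (\<Sum>k<N. ennreal (w k) * indicator A (x k))"
      unfolding P_atom_def by blast
    have N1: "1 \<le> N"
    proof (rule ccontr)
      assume "\<not> 1 \<le> N" then have "N = 0" by simp
      then show False using w1 by simp
    qed
    obtain g where g: "path g" "pathstart g = pathfinish g" "x ` {..<N} \<subseteq> path_image g"
        "curve_length g 0 1 \<le> ereal (C * real N powr (1 - 1/d))"
      using core[OF N1, of x] by blast
    have sp: "space \<nu> = UNIV" using sets_eq_imp_space_eq[OF sets\<nu>] by simp
    have "emeasure \<nu> (space \<nu>) = (\<Sum>k<N. ennreal (w k) * indicator UNIV (x k))"
      unfolding sp by (rule em[rule_format]) simp
    also have "\<dots> = (\<Sum>k<N. ennreal (w k))" by simp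
    also have "\<dots> = ennreal (\<Sum>k<N. w k)" using w0 by (intro sum_ennreal) auto
    finally have "emeasure \<nu> (space \<nu>) = 1" using w1 by simp
    then have ps: "prob_space \<nu>" by (rule prob_spaceI)
    have supp: "measure_support \<nu> \<subseteq> g ` {0..1}"
    proof
      fix y assume y: "y \<in> measure_support \<nu>"
      show "y \<in> g ` {0..1}"
      proof (rule ccontr)
        assume yn: "y \<notin> g ` {0..1}"
        define U where "U = - (x ` {..<N})"
        have oU: "open U" unfolding U_def by (intro open_Compl finite_imp_closed) simp
        have yU: "y \<in> U" using yn g(3) unfolding U_def path_image_def by auto
        have "emeasure \<nu> U = (\<Sum>k<N. ennreal (w k) * indicator U (x k))"
          by (rule em[rule_format]) (use oU in simp)
        also have "\<dots> = 0" unfolding U_def by (intro sum.neutral) auto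
        finally have "emeasure \<nu> U = 0" .
        moreover have "emeasure \<nu> U > 0" using y oU yU unfolding measure_support_def by blast
        ultimately show False by simp
      qed
    qed
    have "continuous_on {0..1} g" using g(1) unfolding path_def .
    moreover have "g 0 = g 1" using g(2) unfolding pathstart_def pathfinish_def .
    ultimately show "\<nu> \<in> P_curve (C * real N powr (1 - 1/d))"
      unfolding P_curve_def using ps sets\<nu> supp g(4)
      by (intro CollectI conjI exI[of _ g] exI[of _ 0] exI[of _ 1]) auto
  qed
  show ?thesis using C0 tsp pc by blast
qed

end
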